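(* Let $R$ be a binary relation on the nodes of a $\lambda$-graph. If $R^{\Downarrow}$ is homogeneous, then $R^{\#}=(R^{\Downarrow})^*$.
   Context: A $\lambda$-graph is a finite directed graph whose nodes are of four kinds: an application node $@(n_1,n_2)$ has exactly two children, its left child $n_1$ and its right child $n_2$; an abstraction node $\lambda(n)$ has exactly one child, its body $n$; a free variable node has no children; a bound variable node $\mathrm{var}(l)$ has exactly one outgoing binding edge, to an abstraction node $l$ (its binder). (It is moreover required to be acyclic when binding edges are ignored, and dominated.) Two nodes are homogeneous if both are application nodes, or both abstraction nodes, or both free variable nodes, or both bound variable nodes; a binary relation $R$ on nodes is homogeneous if it only relates homogeneous nodes. Rules: $(\swarrow)$: $@(n_1,n_2)\,R\,@(m_1,m_2)$ implies $n_1\,R\,m_1$; $(\searrow)$: $@(n_1,n_2)\,R\,@(m_1,m_2)$ implies $n_2\,R\,m_2$; $(\downarrow)$: $\lambda(n)\,R\,\lambda(m)$ implies $n\,R\,m$. $R$ is propagated if closed under $(\swarrow),(\downarrow),(\searrow)$. $R^*$ denotes the reflexive–symmetric–transitive closure of $R$; $R^{\Downarrow}$ (propagation) is the smallest propagated relation containing $R$; $R^{\#}$ (spreading) is the smallest propagated equivalence relation containing $R$. *)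

theory Defs
  imports Main
begin

text \<open>Node kinds: application with left/right child, abstraction with body,
free variable, bound variable with its binder (binding edge).\<close>
datatype 'n node = App 'n 'n | Abs 'n | FVar | BVar 'n

fun children :: "'n node \<Rightarrow> 'n set" where
  "children (App a b) = {a, b}"
| "children (Abs a) = {a}"
| "children FVar = {}"
| "children (BVar l) = {}"

definition child_edges :: "'n set \<Rightarrow> ('n \<Rightarrow> 'n node) \<Rightarrow> ('n \<times> 'n) set" where
  "child_edges V lab = {(x, y). x \<in> V \<and> y \<in> children (lab x)}"

definition is_root :: "'n set \<Rightarrow> ('n \<Rightarrow> 'n node) \<Rightarrow> 'n \<Rightarrow> bool" where
  "is_root V lab r \<longleftrightarrow> r \<in> V \<and> (\<nexists>x. (x, r) \<in> child_edges V lab)"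

definition is_path :: "'n set \<Rightarrow> ('n \<Rightarrow> 'n node) \<Rightarrow> 'n list \<Rightarrow> bool" where
  "is_path V lab p \<longleftrightarrow> p \<noteq> [] \<and> set p \<subseteq> V \<and>
     (\<forall>i. Suc i < length p \<longrightarrow> (p ! i, p ! Suc i) \<in> child_edges V lab)"

definition dominated :: "'n set \<Rightarrow> ('n \<Rightarrow> 'n node) \<Rightarrow> bool" where
  "dominated V lab \<longleftrightarrow> (\<forall>v\<in>V. \<forall>l. lab v = BVar l \<longrightarrow>
     (\<forall>p. is_path V lab p \<and> is_root V lab (hd p) \<and> last p = v \<longrightarrow> l \<in> set p))"

definition lambda_graph :: "'n set \<Rightarrow> ('n \<Rightarrow> 'n node) \<Rightarrow> bool" where
  "lambda_graph V lab \<longleftrightarrow> finite V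
     \<and> (\<forall>x\<in>V. children (lab x) \<subseteq> V)
     \<and> (\<forall>x\<in>V. \<forall>l. lab x = BVar l \<longrightarrow> l \<in> V \<and> (\<exists>b. lab l = Abs b))
     \<and> acyclic (child_edges V lab)
     \<and> dominated V lab"

fun homogeneous_nodes :: "'n node \<Rightarrow> 'n node \<Rightarrow> bool" where
  "homogeneous_nodes (App _ _) (App _ _) = True"
| "homogeneous_nodes (Abs _) (Abs _) = True"
| "homogeneous_nodes FVar FVar = True"
| "homogeneous_nodes (BVar _) (BVar _) = True"
| "homogeneous_nodes _ _ = False"

definition homogeneous :: "('n \<Rightarrow> 'n node) \<Rightarrow> ('n \<Rightarrow> 'n \<Rightarrow> bool) \<Rightarrow> bool" where
  "homogeneous lab R \<longleftrightarrow> (\<forall>x y. R x y \<longrightarrow> homogeneous_nodes (lab x) (lab y))"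

inductive propagation :: "('n \<Rightarrow> 'n node) \<Rightarrow> ('n \<Rightarrow> 'n \<Rightarrow> bool) \<Rightarrow> 'n \<Rightarrow> 'n \<Rightarrow> bool"
  for lab R where
  base: "R x y \<Longrightarrow> propagation lab R x y"
| left: "propagation lab R n m \<Longrightarrow> lab n = App n1 n2 \<Longrightarrow> lab m = App m1 m2 \<Longrightarrow>
           propagation lab R n1 m1"
| right: "propagation lab R n m \<Longrightarrow> lab n = App n1 n2 \<Longrightarrow> lab m = App m1 m2 \<Longrightarrow>
           propagation lab R n2 m2"
| down: "propagation lab R n m \<Longrightarrow> lab n = Abs n' \<Longrightarrow> lab m = Abs m' \<Longrightarrow>
           propagation lab R n' m'"

inductive eq_closure :: "'n set \<Rightarrow> ('n \<Rightarrow> 'n \<Rightarrow> bool) \<Rightarrow> 'n \<Rightarrow> 'n \<Rightarrow> bool"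
  for V R where
  base: "R x y \<Longrightarrow> eq_closure V R x y"
| refl: "x \<in> V \<Longrightarrow> eq_closure V R x x"
| sym: "eq_closure V R x y \<Longrightarrow> eq_closure V R y x"
| trans: "eq_closure V R x y \<Longrightarrow> eq_closure V R y z \<Longrightarrow> eq_closure V R x z"

inductive spreading :: "'n set \<Rightarrow> ('n \<Rightarrow> 'n node) \<Rightarrow> ('n \<Rightarrow> 'n \<Rightarrow> bool) \<Rightarrow> 'n \<Rightarrow> 'n \<Rightarrow> bool"
  for V lab R where
  base: "R x y \<Longrightarrow> spreading V lab R x y"
| refl: "x \<in> V \<Longrightarrow> spreading V lab R x x"
| sym: "spreading V lab R x y \<Longrightarrow> spreading V lab R y x"
| trans: "spreading V lab R x y \<Longrightarrow> spreading V lab R y z \<Longrightarrow> spreading V lab R x z"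
| left: "spreading V lab R n m \<Longrightarrow> lab n = App n1 n2 \<Longrightarrow> lab m = App m1 m2 \<Longrightarrow>
           spreading V lab R n1 m1"
| right: "spreading V lab R n m \<Longrightarrow> lab n = App n1 n2 \<Longrightarrow> lab m = App m1 m2 \<Longrightarrow>
           spreading V lab R n2 m2"
| down: "spreading V lab R n m \<Longrightarrow> lab n = Abs n' \<Longrightarrow> lab m = Abs m' \<Longrightarrow>
           spreading V lab R n' m'"

end

theory Submission
  imports Defs
begin

lemma prop_V:
  assumes "lambda_graph V lab" "\<forall>x y. R x y \<longrightarrow> x \<in> V \<and> y \<in> V"
  shows "propagation lab R x y \<Longrightarrow> x \<in> V \<and> y \<in> V"
proof (induction rule: propagation.induct)
  case (base x y) then show ?case using assms(2) by blast
next
  case (left n m n1 n2 m1 m2)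
  then show ?case using assms(1) unfolding lambda_graph_def
    by (metis children.simps(1) insert_subset)
next
  case (right n m n1 n2 m1 m2)
  then show ?case using assms(1) unfolding lambda_graph_def
    by (metis children.simps(1) insert_subset)
next
  case (down n m n' m')
  then show ?case using assms(1) unfolding lambda_graph_def
    by (metis children.simps(2) insert_subset)
qed

lemma hom_sym: "homogeneous_nodes a b \<Longrightarrow> homogeneous_nodes b a"
  by (cases a; cases b; simp)

lemma hom_trans: "homogeneous_nodes a b \<Longrightarrow> homogeneous_nodes b c \<Longrightarrow> homogeneous_nodes a c"
  by (cases a; cases b; cases c; simp)

lemma hom_refl: "homogeneous_nodes a a"
  by (cases a; simp)

lemma eq_strong:
  assumes "lambda_graph V lab" "\<forall>x y. R x y \<longrightarrow> x \<in> V \<and> y \<in> V"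
    and "homogeneous lab (propagation lab R)"
  shows "eq_closure V (propagation lab R) x y \<Longrightarrow>
    homogeneous_nodes (lab x) (lab y) \<and>
    (\<forall>n1 n2 m1 m2. lab x = App n1 n2 \<and> lab y = App m1 m2 \<longrightarrow>
        eq_closure V (propagation lab R) n1 m1 \<and> eq_closure V (propagation lab R) n2 m2) \<and>
    (\<forall>n m. lab x = Abs n \<and> lab y = Abs m \<longrightarrow> eq_closure V (propagation lab R) n m)"
proof (induction rule: eq_closure.induct)
  case (base x y)
  then show ?case using assms(3) unfolding homogeneous_def
    by (meson eq_closure.base propagation.down propagation.left propagation.right)
next
  case (refl x)
  have "children (lab x) \<subseteq> V" using refl assms(1) unfolding lambda_graph_def by blast
  then show ?case by (auto simp: hom_refl intro: eq_closure.refl)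
next
  case (sym x y)
  then show ?case by (auto simp: hom_sym intro: eq_closure.sym)
next
  case (trans x y z)
  have A: "homogeneous_nodes (lab x) (lab z)" using trans hom_trans by blast
  have B: "\<forall>n1 n2 m1 m2. lab x = App n1 n2 \<and> lab z = App m1 m2 \<longrightarrow>
        eq_closure V (propagation lab R) n1 m1 \<and> eq_closure V (propagation lab R) n2 m2"
  proof (intro allI impI)
    fix n1 n2 m1 m2 assume h: "lab x = App n1 n2 \<and> lab z = App m1 m2"
    show "eq_closure V (propagation lab R) n1 m1 \<and> eq_closure V (propagation lab R) n2 m2"
    proof -
    have "homogeneous_nodes (lab x) (lab y)" using trans by blast
    then obtain a b where y: "lab y = App a b" using h
      by (cases "lab y") auto
      have 1: "eq_closure V (propagation lab R) n1 a \<and> eq_closure V (propagation lab R) n2 b"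
        using trans.IH(1) h y by blast
      have 2: "eq_closure V (propagation lab R) a m1 \<and> eq_closure V (propagation lab R) b m2"
        using trans.IH(2) h y by blast
      show ?thesis using 1 2 by (blast intro: eq_closure.trans)
    qed
  qed
  have C: "\<forall>n m. lab x = Abs n \<and> lab z = Abs m \<longrightarrow> eq_closure V (propagation lab R) n m"
  proof (intro allI impI)
    fix n m assume h: "lab x = Abs n \<and> lab z = Abs m"
    have "homogeneous_nodes (lab x) (lab y)" using trans by blast
    then obtain a where y: "lab y = Abs a" using h
      by (cases "lab y") auto
    show "eq_closure V (propagation lab R) n m"
    proof -
      have 1: "eq_closure V (propagation lab R) n a" using trans.IH(1) h y by blast
      have 2: "eq_closure V (propagation lab R) a m" using trans.IH(2) h y by blast
      show ?thesis using 1 2 by (blast intro: eq_closure.trans)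
    qed
  qed
  show ?case using A B C by blast
qed

lemma prop_spread: "propagation lab R x y \<Longrightarrow> spreading V lab R x y"
  by (induction rule: propagation.induct) (auto intro: spreading.intros)

theorem mainTheorem11:
  fixes V :: "'n set" and lab :: "'n \<Rightarrow> 'n node" and R :: "'n \<Rightarrow> 'n \<Rightarrow> bool"
  assumes "lambda_graph V lab"
    and "\<forall>x y. R x y \<longrightarrow> x \<in> V \<and> y \<in> V"
    and "homogeneous lab (propagation lab R)"
  shows "spreading V lab R = eq_closure V (propagation lab R)"
proof (intro ext iffI)
  fix x y assume "spreading V lab R x y"
  then show "eq_closure V (propagation lab R) x y"
  proof (induction rule: spreading.induct)
    case (base x y) then show ?case by (simp add: eq_closure.base propagation.base)
  next
    case (refl x) then show ?case by (rule eq_closure.refl)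
  next
    case (sym x y) then show ?case by (blast intro: eq_closure.sym)
  next
    case (trans x y z) then show ?case by (blast intro: eq_closure.trans)
  next
    case (left n m n1 n2 m1 m2) then show ?case using eq_strong[OF assms] by blast
  next
    case (right n m n1 n2 m1 m2) then show ?case using eq_strong[OF assms] by blast
  next
    case (down n m n' m') then show ?case using eq_strong[OF assms] by blast
  qed
next
  fix x y assume "eq_closure V (propagation lab R) x y"
  then show "spreading V lab R x y"
    by (induction rule: eq_closure.induct) (auto intro: spreading.intros prop_spread)
qed

end
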